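(* Let $k\in\mathbb{N}$ with $\gcd(k,6)=2$, let $h$ be an integer with $\gcd(h,k)=1$, and let $h'$ be an integer with $hh'\equiv-1\pmod{4k}$ and $3\mid h'$. Then $$\frac{\omega_{3h,\frac{k}{2}}\,\omega_{h,\frac{k}{2}}\,\omega_{h,k}}{\omega_{3h,k}}=\exp\!\left( \frac{2\pi i}{36k} \left( h (9+9k) + h'(-5+2k^2) \right)\right)$$ and $$\frac{\omega_{3h,k}\,\omega_{h,\frac{k}{2}}\,\omega_{h,k}}{\omega_{3h,\frac{k}{2}}^3} =-\exp\!\left( -\frac{2\pi i}{18k} \left(h ( 9+9k) + h'(1-k^2) \right)\right).$$
   Context: For coprime integers $h$ and $K\ge1$, $\omega_{h,K}=\exp(\pi i\, s(h,K))$, where $s(h,K)=\sum_{r=1}^{K-1}\frac{r}{K}\left(\frac{hr}{K}-\lfloor \frac{hr}{K}\rfloor-\frac12\right)$ is the Dedekind sum (the multiplier of the Dedekind eta function; equivalently given by Rademacher's explicit formula in terms of Kronecker symbols and an integer $\tilde h$ with $h\tilde h\equiv-1\pmod K$). *)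

theory Defs
  imports "HOL-Analysis.Analysis" "HOL-Number_Theory.Cong"
begin

definition dedekind_sum :: "int \<Rightarrow> nat \<Rightarrow> real" where
  "dedekind_sum h K = (\<Sum>r=1..<K. (real r / real K) *
      (real_of_int (h * int r) / real K - real_of_int \<lfloor>real_of_int (h * int r) / real K\<rfloor> - 1/2))"

definition omega :: "int \<Rightarrow> nat \<Rightarrow> complex" where
  "omega h K = exp (complex_of_real pi * \<i> * complex_of_real (dedekind_sum h K))"

end

theory Submission
  imports Defs
begin


definition AA :: "int \<Rightarrow> nat \<Rightarrow> int" where
  "AA d c = (\<Sum>r=1..<c. int r * (d * int r div int c))"

definition DD :: "int \<Rightarrow> nat \<Rightarrow> int" where
  "DD d c = 2*d*(int c - 1)*(2*int c - 1) - 12 * AA d c - 3 * int c * (int c - 1)"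

lemma sum_r_real: "(\<Sum>r=1..<c. real r) = real c * (real c - 1) / 2"
  by (induction c) (auto simp: field_simps)

lemma sum_r2_real: "(\<Sum>r=1..<c. real r ^ 2) = real c * (real c - 1) * (2 * real c - 1) / 6"
  by (induction c) (auto simp: field_simps power2_eq_square)

lemma dedekind_DD:
  assumes "c \<ge> 1"
  shows "dedekind_sum d c = real_of_int (DD d c) / (12 * real c)"
proof -
  have fl: "\<lfloor>real_of_int (d * int r) / real c\<rfloor> = d * int r div int c" for r
  proof -
    have "real_of_int (d * int r) / real c = real_of_int (d * int r) / real_of_int (int c)" by simp
    then show ?thesis by (simp only: floor_divide_of_int_eq)
  qed
  have cpos: "real c > 0" using assms by simp
  have "dedekind_sum d c = (\<Sum>r=1..<c. real_of_int d / (real c)^2 * (real r)^2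
      - (1 / real c) * real_of_int (int r * (d * int r div int c)) - (1/(2 * real c)) * real r)"
    unfolding dedekind_sum_def fl
    by (rule sum.cong) (auto simp: fl field_simps power2_eq_square)
  also have "\<dots> = real_of_int d / (real c)^2 * (\<Sum>r=1..<c. (real r)^2)
      - (1 / real c) * real_of_int (AA d c) - (1/(2 * real c)) * (\<Sum>r=1..<c. real r)"
    by (simp add: AA_def sum_subtractf sum_distrib_left)
  also have "\<dots> = real_of_int (DD d c) / (12 * real c)"
    using cpos unfolding sum_r_real sum_r2_real by (simp add: DD_def field_simps power2_eq_square)
  finally show ?thesis .
qed



lemma sum_r_int: "2 * (\<Sum>r=1..<c. int r) = int c * (int c - 1)"
  by (induction c) (auto simp: algebra_simps)

lemma sum_r2_int: "6 * (\<Sum>r=1..<c. int r ^ 2) = int c * (int c - 1) * (2 * int c - 1)"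
  by (induction c) (auto simp: algebra_simps power2_eq_square)

lemma DD_periodic:
  assumes "c \<ge> 1"
  shows "DD (d + int c * t) c = DD d c"
proof -
  have "AA (d + int c * t) c = (\<Sum>r=1..<c. int r * (d * int r div int c) + t * int r ^ 2)"
    unfolding AA_def
  proof (rule sum.cong)
    fix r assume "r \<in> {1..<c}"
    have "(d + int c * t) * int r div int c = (d * int r + int c * (t * int r)) div int c"
      by (simp add: algebra_simps)
    also have "\<dots> = d * int r div int c + t * int r" using assms by simp
    finally show "int r * ((d + int c * t) * int r div int c) = int r * (d * int r div int c) + t * int r ^ 2"
      by (simp add: algebra_simps power2_eq_square)
  qed simp
  also have "\<dots> = AA d c + t * (\<Sum>r=1..<c. int r ^ 2)"
    by (simp add: AA_def sum.distrib sum_distrib_left)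
  finally have e: "AA (d + int c * t) c = AA d c + t * (\<Sum>r=1..<c. int r ^ 2)" .
  have "12 * AA (d + int c * t) c = 12 * AA d c + 2 * t * (6 * (\<Sum>r=1..<c. int r ^ 2))"
    unfolding e by (simp add: algebra_simps)
  then have "12 * AA (d + int c * t) c = 12 * AA d c + 2 * t * (int c * (int c - 1) * (2 * int c - 1))"
    unfolding sum_r2_int .
  then show ?thesis unfolding DD_def by (simp add: algebra_simps)
qed

lemma mult_mod_bij:
  fixes h k :: nat
  assumes "coprime h k" "k > 0"
  shows "bij_betw (\<lambda>x. h * x mod k) {1..<k} {1..<k}"
proof -
  have inj: "inj_on (\<lambda>x. h * x mod k) {1..<k}"
  proof (rule inj_onI)
    fix x y assume x: "x \<in> {1..<k}" and y: "y \<in> {1..<k}" and eq: "h * x mod k = h * y mod k"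
    then have "[h * x = h * y] (mod k)" by (simp add: cong_def)
    then have "[x = y] (mod k)" using assms(1) by (simp add: cong_mult_lcancel_nat)
    then show "x = y" using x y cong_less_modulus_unique_nat by auto
  qed
  have sub: "(\<lambda>x. h * x mod k) ` {1..<k} \<subseteq> {1..<k}"
  proof
    fix z assume "z \<in> (\<lambda>x. h * x mod k) ` {1..<k}"
    then obtain x where x: "x \<in> {1..<k}" and z: "z = h * x mod k" by auto
    have "z \<noteq> 0"
    proof
      assume "z = 0"
      then have "k dvd h * x" using z by auto
      then have "k dvd x" using assms(1) by (metis coprime_commute coprime_dvd_mult_right_iff)
      then show False using x by (auto dest: dvd_imp_le)
    qed
    moreover have "z < k" using z assms(2) by simp
    ultimately show "z \<in> {1..<k}" by auto
  qed
  have "(\<lambda>x. h * x mod k) ` {1..<k} = {1..<k}"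
    using endo_inj_surj[OF _ sub inj] by simp
  then show ?thesis using inj by (simp add: bij_betw_def)
qed



lemma AA_nat: "AA (int h) k = (\<Sum>r=1..<k. int r * int (h * r div k))"
  unfolding AA_def by (simp add: zdiv_int)

lemma I1:
  fixes h k :: nat
  assumes "coprime h k" "k > 0"
  shows "int k ^ 2 * (\<Sum>x=1..<k. int (h * x div k) ^ 2)
         = (1 - int h ^ 2) * (\<Sum>x=1..<k. int x ^ 2) + 2 * int h * int k * AA (int h) k"
proof -
  define \<rho> where "\<rho> x = h * x mod k" for x
  have key: "int k * int (h * x div k) = int h * int x - int (\<rho> x)" for x
  proof -
    have "k * (h * x div k) + \<rho> x = h * x" unfolding \<rho>_def by simp
    then have "int k * int (h * x div k) + int (\<rho> x) = int h * int x" by (metis of_nat_add of_nat_mult)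
    then show ?thesis by linarith
  qed
  have r2: "(\<Sum>x=1..<k. int (\<rho> x) ^ 2) = (\<Sum>x=1..<k. int x ^ 2)"
    using sum.reindex_bij_betw[OF mult_mod_bij[OF assms], of "\<lambda>x. int x ^ 2"] unfolding \<rho>_def by simp
  have a: "int k * AA (int h) k = int h * (\<Sum>x=1..<k. int x ^ 2) - (\<Sum>x=1..<k. int x * int (\<rho> x))"
  proof -
    have "int k * AA (int h) k = (\<Sum>x=1..<k. int x * (int k * int (h * x div k)))"
      unfolding AA_nat by (simp add: sum_distrib_left algebra_simps)
    also have "\<dots> = (\<Sum>x=1..<k. int h * int x ^ 2 - int x * int (\<rho> x))"
      unfolding key by (simp add: algebra_simps power2_eq_square)
    finally show ?thesis by (simp add: sum_subtractf sum_distrib_left)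
  qed
  have "int k ^ 2 * (\<Sum>x=1..<k. int (h * x div k) ^ 2) = (\<Sum>x=1..<k. (int k * int (h * x div k)) ^ 2)"
    by (simp add: sum_distrib_left power_mult_distrib)
  also have "\<dots> = (\<Sum>x=1..<k. int h ^ 2 * int x ^ 2 - 2 * int h * (int x * int (\<rho> x)) + int (\<rho> x) ^ 2)"
    unfolding key by (rule sum.cong) (auto simp: power2_eq_square algebra_simps)
  also have "\<dots> = int h ^ 2 * (\<Sum>x=1..<k. int x ^ 2) - 2 * int h * (\<Sum>x=1..<k. int x * int (\<rho> x)) + (\<Sum>x=1..<k. int (\<rho> x) ^ 2)"
    by (simp add: sum.distrib sum_subtractf sum_distrib_left)
  also have "\<dots> = (1 - int h ^ 2) * (\<Sum>x=1..<k. int x ^ 2) + 2 * int h * int k * AA (int h) k"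
    unfolding r2 using a by algebra
  finally show ?thesis .
qed

lemma sum_odd_nat: "(\<Sum>y=1..<h. if y \<le> q then 2*y-1 else 0) = (min q (h - 1))^2" for h q :: nat
proof (induction h)
  case 0 then show ?case by simp
next
  case (Suc h)
  show ?case
  proof (cases "h = 0")
    case True then show ?thesis by simp
  next
    case False
    then have "{1..<Suc h} = insert h {1..<h}" by auto
    then have "(\<Sum>y=1..<Suc h. if y \<le> q then 2*y-1 else 0) = (if h \<le> q then 2*h-1 else 0) + (min q (h - 1))^2"
      using Suc by simp
    also have "\<dots> = (min q h)^2" using False
      by (cases "h \<le> q") (auto simp: power2_eq_square algebra_simps min_def, (cases h; simp add: algebra_simps)+)
    finally show ?thesis by simp
  qed
qed

lemma count_gt: "(\<Sum>x=1..<k. if p < x then c else 0) = c * (k - 1 - p)" for c :: nat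
proof (induction k)
  case 0 then show ?case by simp
next
  case (Suc k)
  show ?case
  proof (cases "k = 0")
    case True then show ?thesis by simp
  next
    case False
    then have "{1..<Suc k} = insert k {1..<k}" by auto
    then have "(\<Sum>x=1..<Suc k. if p < x then c else 0) = (if p < k then c else 0) + c * (k - 1 - p)"
      using Suc by simp
    also have "\<dots> = c * (Suc k - 1 - p)"
    proof (cases "p < k")
      case True
      then have "Suc k - 1 - p = Suc (k - 1 - p)" using False by simp
      then show ?thesis using True by simp
    qed simp
    finally show ?thesis .
  qed
qed



lemma sum_reflect: "(\<Sum>y=1..<n. f (n - y)) = (\<Sum>y=1..<n. f y)" for n :: nat
  by (rule sum.reindex_bij_witness[of _ "\<lambda>y. n - y" "\<lambda>y. n - y"]) auto

lemma not_dvd_small: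
  fixes h k y :: nat
  assumes "coprime k h" "1 \<le> y" "y < h"
  shows "\<not> h dvd k * y"
proof
  assume "h dvd k * y"
  then have "h dvd y" using assms(1) by (metis coprime_commute coprime_dvd_mult_right_iff)
  then show False using assms by (auto dest: dvd_imp_le)
qed

lemma div_reflect:
  fixes h k y :: nat
  assumes "coprime k h" "1 \<le> y" "y < h"
  shows "k * (h - y) div h = k - 1 - k * y div h"
proof -
  define q where "q = k * y div h"
  define r where "r = k * y mod h"
  have hpos: "h > 0" using assms by simp
  have e: "k * y = h * q + r" unfolding q_def r_def by simp
  have r0: "r > 0" using not_dvd_small[OF assms] unfolding r_def by (simp add: dvd_eq_mod_eq_0)
  have rh: "r < h" unfolding r_def using hpos by simp
  have qk: "q < k"
  proof -
    have "k > 0"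
    proof (rule ccontr)
      assume "\<not> k > 0"
      then have "k = 0" by simp
      with assms(1) have "h = 1" by simp
      with assms(2,3) show False by simp
    qed
    then have "k * y < k * h" using assms by simp
    then show ?thesis unfolding q_def using hpos by (simp add: div_less_iff_less_mult mult.commute)
  qed
  have kyh: "k * y \<le> k * h" using assms(3) by simp
  have "int (k * (h - y)) = int (k * h - k * y)" by (simp add: diff_mult_distrib2)
  also have "\<dots> = int (k * h) - int (k * y)" using kyh by (rule of_nat_diff)
  also have "int (k * y) = int h * int q + int r" using e by (metis of_nat_add of_nat_mult)
  finally have ie: "int (k * (h - y)) = int k * int h - int h * int q - int r" by simp
  have d1: "int (k - 1 - q) = int k - 1 - int q" using qk by linarith
  have d2: "int (Suc (k - 1 - q)) = int k - int q" using qk by linarith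
  show ?thesis unfolding q_def[symmetric]
  proof (rule div_nat_eqI)
    have "int (h * (k - 1 - q)) = int h * (int k - 1 - int q)" by (simp only: of_nat_mult d1)
    then have "int (h * (k - 1 - q)) = int h * int k - int h - int h * int q" by (simp add: algebra_simps)
    then have "int (h * (k - 1 - q)) \<le> int (k * (h - y))" using ie rh by (simp add: algebra_simps)
    then show "h * (k - 1 - q) \<le> k * (h - y)" by (simp only: of_nat_le_iff)
    have "int (h * Suc (k - 1 - q)) = int h * (int k - int q)" by (simp only: of_nat_mult d2)
    then have "int (h * Suc (k - 1 - q)) = int h * int k - int h * int q" by (simp add: algebra_simps)
    then have "int (k * (h - y)) < int (h * Suc (k - 1 - q))" using ie r0 by (simp add: algebra_simps)
    then show "k * (h - y) < h * Suc (k - 1 - q)" by (simp only: of_nat_less_iff)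
  qed
qed

lemma sum_p:
  fixes h k :: nat
  assumes "coprime k h"
  shows "2 * (\<Sum>y=1..<h. int (k * y div h)) = (int h - 1) * (int k - 1)"
proof -
  have "(\<Sum>y=1..<h. int (k * y div h)) = (\<Sum>y=1..<h. int (k * (h - y) div h))"
    using sum_reflect[of "\<lambda>y. int (k * y div h)" h] by simp
  also have "\<dots> = (\<Sum>y=1..<h. int k - 1 - int (k * y div h))"
  proof (rule sum.cong)
    fix y assume y: "y \<in> {1..<h}"
    have "k > 0"
    proof (rule ccontr)
      assume "\<not> k > 0"
      then have "k = 0" by simp
      with assms(1) have "h = 1" by simp
      with y show False by simp
    qed
    then have "k * y < k * h" using y by simp
    then have lt: "k * y div h < k" using y by (simp add: div_less_iff_less_mult mult.commute)
    have "int (k - 1 - k * y div h) = int k - 1 - int (k * y div h)" using lt by linarith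
    then show "int (k * (h - y) div h) = int k - 1 - int (k * y div h)"
      using div_reflect[OF assms, of y] y by simp
  qed simp
  also have "\<dots> = (int h - 1) * (int k - 1) - (\<Sum>y=1..<h. int (k * y div h))"
  proof (cases h)
    case 0 then show ?thesis using assms by simp
  next
    case (Suc n)
    have "(\<Sum>y=1..<h. int k - 1 - int (k * y div h)) = (\<Sum>y=1..<h. int k - 1) - (\<Sum>y=1..<h. int (k * y div h))"
      by (simp add: sum_subtractf)
    also have "(\<Sum>y=1..<h. int k - 1) = (int h - 1) * (int k - 1)" using Suc by simp
    finally show ?thesis .
  qed
  finally show ?thesis by simp
qed



lemma I2:
  fixes h k :: nat
  assumes "coprime h k" "h > 0" "k > 0"
  shows "2 * (\<Sum>x=1..<k. int (h * x div k) ^ 2)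
       = 2 * (int k - 1) * (int h - 1) ^ 2 - 4 * AA (int k) h + (int h - 1) * (int k - 1)"
proof -
  have ck: "coprime k h" using assms(1) by (simp add: coprime_commute)
  have qle: "h * x div k \<le> h - 1" if "x \<in> {1..<k}" for x
  proof -
    have "h * x < h * k" using that assms by simp
    then have "h * x div k < h" using assms by (simp add: div_less_iff_less_mult)
    then show ?thesis by simp
  qed
  have ple: "k * y div h \<le> k - 1" if "y \<in> {1..<h}" for y
  proof -
    have "k * y < k * h" using that assms by simp
    then have "k * y div h < k" using assms by (simp add: div_less_iff_less_mult mult.commute)
    then show ?thesis by simp
  qed
  have cond: "(y \<le> h * x div k) = (k * y div h < x)" if x: "x \<in> {1..<k}" and y: "y \<in> {1..<h}" for x y
  proof -
    have ne: "k * y \<noteq> h * x"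
    proof
      assume "k * y = h * x"
      then have "k dvd h * x" by (metis dvd_triv_left)
      then have "k dvd x" using assms(1) by (metis coprime_commute coprime_dvd_mult_right_iff)
      then show False using x by (auto dest: dvd_imp_le)
    qed
    have "(y \<le> h * x div k) = (y * k \<le> h * x)" using assms by (simp add: less_eq_div_iff_mult_less_eq)
    also have "\<dots> = (k * y < x * h)" using ne by (auto simp: mult.commute)
    also have "\<dots> = (k * y div h < x)" using assms by (simp add: div_less_iff_less_mult)
    finally show ?thesis .
  qed
  have "(\<Sum>x=1..<k. (h * x div k) ^ 2) = (\<Sum>x=1..<k. \<Sum>y=1..<h. if y \<le> h * x div k then 2*y-1 else 0)"
  proof (rule sum.cong)
    fix x assume "x \<in> {1..<k}"
    then have "min (h * x div k) (h - 1) = h * x div k" using qle by (simp add: min_def)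
    moreover have "(\<Sum>y=1..<h. if y \<le> h * x div k then 2*y-1 else 0) = (min (h * x div k) (h - 1))^2"
      by (rule sum_odd_nat)
    ultimately show "(h * x div k) ^ 2 = (\<Sum>y=1..<h. if y \<le> h * x div k then 2*y-1 else 0)"
      by simp
  qed simp
  also have "\<dots> = (\<Sum>y=1..<h. \<Sum>x=1..<k. if y \<le> h * x div k then 2*y-1 else 0)"
    by (rule sum.swap)
  also have "\<dots> = (\<Sum>y=1..<h. \<Sum>x=1..<k. if k * y div h < x then 2*y-1 else 0)"
    by (intro sum.cong refl) (simp add: cond)
  also have "\<dots> = (\<Sum>y=1..<h. (2*y-1) * (k - 1 - k * y div h))"
    by (intro sum.cong refl) (rule count_gt)
  finally have nateq: "(\<Sum>x=1..<k. (h * x div k) ^ 2) = (\<Sum>y=1..<h. (2*y-1) * (k - 1 - k * y div h))" .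
  have "(\<Sum>x=1..<k. int (h * x div k) ^ 2) = int (\<Sum>x=1..<k. (h * x div k) ^ 2)" by simp
  also have "\<dots> = (\<Sum>y=1..<h. int ((2*y-1) * (k - 1 - k * y div h)))" unfolding nateq by simp
  also have "\<dots> = (\<Sum>y=1..<h. (2 * int y - 1) * (int k - 1) - 2 * (int y * int (k * y div h)) + int (k * y div h))"
  proof (rule sum.cong)
    fix y assume y: "y \<in> {1..<h}"
    then have "int ((2*y-1) * (k - 1 - k * y div h)) = (2 * int y - 1) * (int k - 1 - int (k * y div h))"
      using ple[OF y] assms by (simp add: of_nat_diff)
    then show "int ((2*y-1) * (k - 1 - k * y div h)) = (2 * int y - 1) * (int k - 1) - 2 * (int y * int (k * y div h)) + int (k * y div h)"
      by (simp add: algebra_simps)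
  qed simp
  also have "\<dots> = (2 * (\<Sum>y=1..<h. int y) - (int h - 1)) * (int k - 1) - 2 * AA (int k) h + (\<Sum>y=1..<h. int (k * y div h))"
    using assms(2) by (simp add: sum.distrib sum_subtractf sum_distrib_left sum_distrib_right AA_nat algebra_simps of_nat_diff)
  finally have e: "(\<Sum>x=1..<k. int (h * x div k) ^ 2) = (2 * (\<Sum>y=1..<h. int y) - (int h - 1)) * (int k - 1) - 2 * AA (int k) h + (\<Sum>y=1..<h. int (k * y div h))" .
  show ?thesis using e sum_r_int[of h] sum_p[OF ck] by algebra
qed

lemma reciprocity:
  fixes h k :: nat
  assumes "coprime h k" "h > 0" "k > 0"
  shows "int h * DD (int h) k + int k * DD (int k) h = int h ^ 2 + int k ^ 2 + 1 - 3 * int h * int k"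
proof -
  note i1 = I1[OF assms(1) assms(3)]
  note i2 = I2[OF assms]
  note p = sum_r2_int[of k]
  have "int k * (int h * DD (int h) k + int k * DD (int k) h) = int k * (int h ^ 2 + int k ^ 2 + 1 - 3 * int h * int k)"
    using i1 i2 p unfolding DD_def by algebra
  then show ?thesis using assms by simp
qed



lemma sum_mod2: "(\<Sum>x=1..m. x mod 2) = (m + 1) div 2" for m :: nat
  by (induction m) (simp_all, presburger)

lemma div2_small:
  fixes c x :: nat
  assumes "x < c" "odd c"
  shows "2 * x div c = (if c < 2 * x then 1 else 0)"
proof (cases "c < 2 * x")
  case True
  then show ?thesis using assms by (auto intro!: div_nat_eqI)
next
  case False
  then have "2 * x < c" using assms by (metis dvd_triv_left le_neq_implies_less not_less)
  then show ?thesis using False by simp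
qed

lemma rho_refl:
  fixes c d r :: nat
  assumes cop: "coprime d c" and r: "r \<in> {1..<c}"
  shows "d * (c - r) mod c = c - d * r mod c"
proof -
  have cpos: "c > 0" using r by simp
  have a: "d * r mod c \<in> {1..<c}" and b: "d * (c - r) mod c \<in> {1..<c}"
    using mult_mod_bij[OF cop cpos] r by (auto simp: bij_betw_def)
  have "(d * r mod c + d * (c - r) mod c) mod c = (d * r + d * (c - r)) mod c" by (simp add: mod_add_eq)
  also have "d * r + d * (c - r) = d * c" using r by (simp add: add_mult_distrib2[symmetric])
  finally have "c dvd (d * r mod c + d * (c - r) mod c)" by (simp add: dvd_eq_mod_eq_0)
  then obtain t where t: "d * r mod c + d * (c - r) mod c = c * t" by blast
  have "t = 1"
  proof -
    have "0 < d * r mod c + d * (c - r) mod c" using a by simp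
    then have "c * t > 0" using t by simp
    moreover have "d * r mod c < c" "d * (c - r) mod c < c" using cpos by simp_all
    then have "c * t < c * 2" using t by linarith
    ultimately have "t > 0" "t < 2" using cpos by simp_all
    then show ?thesis by simp
  qed
  then show ?thesis using t by simp
qed

lemma mod2_cong_iff: "(a mod 2 = b mod (2::nat)) \<longleftrightarrow> (even a \<longleftrightarrow> even b)"
  by (metis odd_iff_mod_2_eq_one even_iff_mod_2_eq_zero)

lemma fsym:
  fixes c x :: nat
  assumes "odd c" "x \<in> {1..<c}"
  shows "(c - x + (if c < 2*(c-x) then 1 else 0)) mod 2 = (x + (if c < 2*x then 1 else 0)) mod (2::nat)"
proof -
  have xc: "x < c" using assms by simp
  have par: "even (c - x) \<longleftrightarrow> odd x" using assms xc by (simp add: even_diff_nat)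
  have ne: "c \<noteq> 2 * x" using assms by auto
  have ne2: "c \<noteq> 2 * (c - x)" using assms(1) by (metis dvd_triv_left)
  have sw: "c < 2 * (c - x) \<longleftrightarrow> \<not> c < 2 * x" using xc ne ne2 by linarith
  show ?thesis unfolding mod2_cong_iff using par sw by auto
qed


lemma pair_parity:
  fixes d n :: nat
  assumes cop: "coprime d (Suc (2*n))"
  shows "even (AA (int d) (Suc (2*n)) + AA (int (2*d)) (Suc (2*n)) - int d * int n - int ((n+1) div 2))"
proof -
  define c where "c = Suc (2*n)"
  have cpos: "c > 0" unfolding c_def by simp
  have codd: "odd c" unfolding c_def by simp
  have cop': "coprime d c" using cop unfolding c_def .
  define \<rho> where "\<rho> r = d * r mod c" for r
  define f where "f x = (x + (if c < 2*x then 1 else 0)) mod (2::nat)" for x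
  define q where "q r = d * r div c" for r
  have bij: "bij_betw \<rho> {1..<c} {1..<c}" unfolding \<rho>_def using mult_mod_bij[OF cop' cpos] .
  have rho_range: "\<rho> r \<in> {1..<c}" if "r \<in> {1..<c}" for r using bij that by (meson bij_betwE)
  have q2: "2 * d * r div c = 2 * q r + (if c < 2 * \<rho> r then 1 else 0)" for r
  proof -
    have e0: "d * r = c * q r + \<rho> r" unfolding q_def \<rho>_def by (rule mult_div_mod_eq[symmetric])
    have "2 * d * r = 2 * (d * r)" by simp
    also have "\<dots> = 2 * (c * q r + \<rho> r)" by (simp only: e0)
    also have "\<dots> = c * (2 * q r) + 2 * \<rho> r" by (simp add: algebra_simps)
    finally have e: "2 * d * r = c * (2 * q r) + 2 * \<rho> r" .
    have "\<rho> r < c" unfolding \<rho>_def using cpos by simp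
    then have "2 * \<rho> r div c = (if c < 2 * \<rho> r then 1 else 0)" using codd by (rule div2_small)
    then show ?thesis unfolding e using cpos by simp
  qed
  have AAsum: "AA (int d) c + AA (int (2*d)) c = (\<Sum>r=1..<c. int r * (int (q r) + int (2 * d * r div c)))"
    unfolding AA_nat q_def by (simp add: sum.distrib algebra_simps)
  have s1: "even ((\<Sum>r=1..<c. int r * (int (q r) + int (2 * d * r div c)))
             - (\<Sum>r=1..<c. int (r mod 2) * (int (q r) + int (2 * d * r div c))))"
  proof -
    have "(\<Sum>r=1..<c. int r * (int (q r) + int (2 * d * r div c))) - (\<Sum>r=1..<c. int (r mod 2) * (int (q r) + int (2 * d * r div c)))
        = (\<Sum>r=1..<c. (int r - int (r mod 2)) * (int (q r) + int (2 * d * r div c)))"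
      by (simp add: sum_subtractf algebra_simps)
    moreover have "even (\<Sum>r=1..<c. (int r - int (r mod 2)) * (int (q r) + int (2 * d * r div c)))"
    proof (rule dvd_sum)
      fix r :: nat
      have "int r = int (2 * (r div 2) + r mod 2)" by simp
      then have "int r - int (r mod 2) = 2 * int (r div 2)" by linarith
      then show "even ((int r - int (r mod 2)) * (int (q r) + int (2 * d * r div c)))" by simp
    qed
    ultimately show ?thesis by simp
  qed
  have s2: "even ((\<Sum>r=1..<c. int (r mod 2) * (int (q r) + int (2 * d * r div c)))
             - (\<Sum>r=1..<c. int (r mod 2) * (int d + int (f (\<rho> r)))))"
  proof -
    have "(\<Sum>r=1..<c. int (r mod 2) * (int (q r) + int (2 * d * r div c))) - (\<Sum>r=1..<c. int (r mod 2) * (int d + int (f (\<rho> r))))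
       = (\<Sum>r=1..<c. int (r mod 2) * ((int (q r) + int (2 * d * r div c)) - (int d + int (f (\<rho> r)))))"
      by (simp add: sum_subtractf algebra_simps)
    moreover have "even (\<Sum>r=1..<c. int (r mod 2) * ((int (q r) + int (2 * d * r div c)) - (int d + int (f (\<rho> r)))))"
    proof (rule dvd_sum)
      fix r :: nat
      show "even (int (r mod 2) * ((int (q r) + int (2 * d * r div c)) - (int d + int (f (\<rho> r)))))"
      proof (cases "even r")
        case True then show ?thesis by simp
      next
        case False
        then obtain s where rs: "r = 2 * s + 1" by (metis oddE)
        have ce: "c * q r + \<rho> r = d * r" unfolding q_def \<rho>_def by simp
        then have "int c * int (q r) + int (\<rho> r) = int d * int r" by (metis of_nat_add of_nat_mult)
        then have "int c * int (q r) + int (\<rho> r) = int d * (2 * int s + 1)" using rs by simp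
        then have X: "int (q r) + int (\<rho> r) - int d = 2 * (int d * int s - int n * int (q r))"
          unfolding c_def by (simp add: algebra_simps)
        have fq: "int (2 * d * r div c) = 2 * int (q r) + (if c < 2 * \<rho> r then 1 else 0)" by (simp add: q2)
        have ff: "int (f (\<rho> r)) = (int (\<rho> r) + (if c < 2 * \<rho> r then 1 else 0)) mod 2"
          unfolding f_def by (simp add: of_nat_mod)
        define B where "B = (if c < 2 * \<rho> r then 1 else 0 :: int)"
        define Y where "Y = int d * int s - int n * int (q r)"
        have md: "(int (\<rho> r) + B) mod 2 = int (\<rho> r) + B - 2 * ((int (\<rho> r) + B) div 2)"
          by (simp add: minus_mult_div_eq_mod)
        have eqn: "(int (q r) + (2 * int (q r) + B)) - (int d + (int (\<rho> r) + B) mod 2)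
              = 2 * (Y + int (q r) - int (\<rho> r) + (int (\<rho> r) + B) div 2)"
          unfolding md using X[folded Y_def] by (smt (verit))
        have "even ((int (q r) + (2 * int (q r) + B)) - (int d + (int (\<rho> r) + B) mod 2))"
          unfolding eqn by (rule dvd_triv_left)
        then have "even ((int (q r) + int (2 * d * r div c)) - (int d + int (f (\<rho> r))))"
          unfolding fq ff B_def by simp
        then show ?thesis by simp
      qed
    qed
    ultimately show ?thesis by simp
  qed
  define F where "F r = int (f (\<rho> r))" for r
  have Frefl: "F (c - r) = F r" if r: "r \<in> {1..<c}" for r
  proof -
    have "\<rho> (c - r) = c - \<rho> r" unfolding \<rho>_def using rho_refl[OF cop' r] .
    then have "f (\<rho> (c - r)) = f (\<rho> r)" unfolding f_def using fsym[OF codd rho_range[OF r]] by simp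
    then show ?thesis unfolding F_def by simp
  qed
  have parrefl: "int ((c - r) mod 2) = 1 - int (r mod 2)" if r: "r \<in> {1..<c}" for r
  proof -
    have "even (c - r) \<longleftrightarrow> odd r" using codd r by (simp add: even_diff_nat)
    then show ?thesis by (cases "even r") (auto simp: mod2_eq_if)
  qed
  have "(\<Sum>r=1..<c. int (r mod 2) * F r) = (\<Sum>r=1..<c. int ((c - r) mod 2) * F (c - r))"
    using sum_reflect[of "\<lambda>r. int (r mod 2) * F r" c] by simp
  also have "\<dots> = (\<Sum>r=1..<c. (1 - int (r mod 2)) * F r)"
    by (rule sum.cong) (simp_all add: Frefl parrefl)
  finally have "(\<Sum>r=1..<c. int (r mod 2) * F r) = (\<Sum>r=1..<c. F r) - (\<Sum>r=1..<c. int (r mod 2) * F r)"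
    by (simp add: sum_subtractf algebra_simps)
  then have half: "2 * (\<Sum>r=1..<c. int (r mod 2) * F r) = (\<Sum>r=1..<c. F r)" by simp
  have "(\<Sum>r=1..<c. F r) = (\<Sum>x=1..<c. int (f x))"
    unfolding F_def using sum.reindex_bij_betw[OF bij, of "\<lambda>x. int (f x)"] by simp
  also have "\<dots> = (\<Sum>x=1..n. int (f x)) + (\<Sum>x=Suc n..<c. int (f x))"
  proof -
    have "{1..<c} = {1..n} \<union> {Suc n..<c}" unfolding c_def by auto
    moreover have "{1..n} \<inter> {Suc n..<c} = {}" by auto
    ultimately show ?thesis by (simp add: sum.union_disjoint)
  qed
  also have "(\<Sum>x=Suc n..<c. int (f x)) = (\<Sum>x=1..n. int (f (c - x)))"
    by (rule sum.reindex_bij_witness[of _ "\<lambda>x. c - x" "\<lambda>x. c - x"]) (auto simp: c_def)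
  also have "\<dots> = (\<Sum>x=1..n. int (f x))"
  proof (rule sum.cong)
    fix x assume "x \<in> {1..n}"
    then have "x \<in> {1..<c}" unfolding c_def by auto
    then show "int (f (c - x)) = int (f x)" unfolding f_def using fsym[OF codd] by simp
  qed simp
  also have "(\<Sum>x=1..n. int (f x)) = (\<Sum>x=1..n. int (x mod 2))"
  proof (rule sum.cong)
    fix x assume "x \<in> {1..n}"
    then have "\<not> c < 2 * x" unfolding c_def by auto
    then show "int (f x) = int (x mod 2)" unfolding f_def by simp
  qed simp
  also have "(\<Sum>x=1..n. int (x mod 2)) = int ((n + 1) div 2)"
    using sum_mod2[of n] by (metis of_nat_sum)
  finally have Fsum: "(\<Sum>r=1..<c. F r) = 2 * int ((n + 1) div 2)" by simp
  have oddcount: "(\<Sum>r=1..<c. int (r mod 2)) = int n"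
  proof -
    have "{1..<c} = {1..2*n}" unfolding c_def by auto
    then have "(\<Sum>r=1..<c. int (r mod 2)) = int (\<Sum>r=1..2*n. r mod 2)" by simp
    also have "\<dots> = int n" using sum_mod2[of "2*n"] by simp
    finally show ?thesis .
  qed
  have S2: "(\<Sum>r=1..<c. int (r mod 2) * (int d + int (f (\<rho> r)))) = int d * int n + int ((n+1) div 2)"
  proof -
    have "(\<Sum>r=1..<c. int (r mod 2) * (int d + int (f (\<rho> r)))) = int d * (\<Sum>r=1..<c. int (r mod 2)) + (\<Sum>r=1..<c. int (r mod 2) * F r)"
      unfolding F_def by (simp add: sum.distrib sum_distrib_left algebra_simps)
    then show ?thesis using oddcount half Fsum by simp
  qed
  have "even ((AA (int d) c + AA (int (2*d)) c) - (int d * int n + int ((n+1) div 2)))"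
  proof -
    have "even (((\<Sum>r=1..<c. int r * (int (q r) + int (2 * d * r div c)))
             - (\<Sum>r=1..<c. int (r mod 2) * (int (q r) + int (2 * d * r div c))))
           + ((\<Sum>r=1..<c. int (r mod 2) * (int (q r) + int (2 * d * r div c)))
             - (\<Sum>r=1..<c. int (r mod 2) * (int d + int (f (\<rho> r))))))"
      using s1 s2 by (rule dvd_add)
    then show ?thesis unfolding AAsum S2[symmetric] by simp
  qed
  then show ?thesis unfolding c_def by (simp add: algebra_simps)
qed



lemma alg1_b0:
  fixes H m g t A5 A6 A7 A8 D1 D2 D3 D4 P5 P6 P7 P8 w5 w6 a :: int
  assumes hH: "H = 4*a+1" and ht: "3*H*g = 8*m*t - 1"
    and r1: "3*H*D1 + m*P5 = 9*H^2+m^2+1-9*H*m"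
    and r2: "H*D2 + m*P6 = H^2+m^2+1-3*H*m"
    and r3: "H*D3 + 2*m*P7 = H^2+4*m^2+1-6*H*m"
    and r4: "3*H*D4 + 2*m*P8 = 9*H^2+4*m^2+1-18*H*m"
    and p5: "P5 = 2*m*(3*H-1)*(6*H-1) - 12*A5 - 9*H*(3*H-1)"
    and p8: "P8 = 4*m*(3*H-1)*(6*H-1) - 12*A8 - 9*H*(3*H-1)"
    and p6: "P6 = 2*m*(H-1)*(2*H-1) - 12*A6 - 3*H*(H-1)"
    and p7: "P7 = 4*m*(H-1)*(2*H-1) - 12*A7 - 3*H*(H-1)"
    and a5: "A5 + A8 = m*((1) + (6)*a) + ((1) + (3)*a) + 2*w5"
    and a6: "A6 + A7 = m*((2)*a) + (a) + 2*w6"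
  shows "3*H*(2*D1 + 2*D2 + D3 - D4 - 2*(H*(3+6*m) + g*(8*m^2-5))) = 16*m*((-3) + (-3)*A8 + (-9)*a + (36)*a*m + (6)*m + (-8)*m^2*t + (5)*t + (3)*w5 + (9)*w6)"
proof -
  have e1: "3*H*D1 = 9*H^2+m^2+1-9*H*m - m*P5" using r1 by linarith
  have e2: "H*D2 = H^2+m^2+1-3*H*m - m*P6" using r2 by linarith
  have e3: "H*D3 = H^2+4*m^2+1-6*H*m - 2*m*P7" using r3 by linarith
  have e4: "3*H*D4 = 9*H^2+4*m^2+1-18*H*m - 2*m*P8" using r4 by linarith
  have f5: "A5 = m*((1) + (6)*a) + ((1) + (3)*a) + 2*w5 - A8" using a5 by linarith
  have f6: "A6 = m*((2)*a) + (a) + 2*w6 - A7" using a6 by linarith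
  have "3*H*(2*D1 + 2*D2 + D3 - D4 - 2*(H*(3+6*m) + g*(8*m^2-5)))
      = 2*(3*H*D1) + 6*(H*D2) + 3*(H*D3) - (3*H*D4) - 6*H*H*(3+6*m) - 2*(3*H*g)*(8*m^2-5)"
    by (simp add: algebra_simps)
  also have "\<dots> = 2*(9*H^2+m^2+1-9*H*m - m*P5) + 6*(H^2+m^2+1-3*H*m - m*P6) + 3*(H^2+4*m^2+1-6*H*m - 2*m*P7) - (9*H^2+4*m^2+1-18*H*m - 2*m*P8) - 6*H*H*(3+6*m) - 2*(8*m*t - 1)*(8*m^2-5)"
    by (simp only: e1 e2 e3 e4 ht)
  also have "\<dots> = 16*m*((-3) + (-3)*A8 + (-9)*a + (36)*a*m + (6)*m + (-8)*m^2*t + (5)*t + (3)*w5 + (9)*w6)"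
    unfolding p5 p6 p7 p8 f5 f6 hH by algebra
  finally show ?thesis .
qed

lemma alg2_b0:
  fixes H m g t A5 A6 A7 A8 D1 D2 D3 D4 P5 P6 P7 P8 w5 w6 a :: int
  assumes hH: "H = 4*a+1" and ht: "3*H*g = 8*m*t - 1"
    and r1: "3*H*D1 + m*P5 = 9*H^2+m^2+1-9*H*m"
    and r2: "H*D2 + m*P6 = H^2+m^2+1-3*H*m"
    and r3: "H*D3 + 2*m*P7 = H^2+4*m^2+1-6*H*m"
    and r4: "3*H*D4 + 2*m*P8 = 9*H^2+4*m^2+1-18*H*m"
    and p5: "P5 = 2*m*(3*H-1)*(6*H-1) - 12*A5 - 9*H*(3*H-1)"
    and p8: "P8 = 4*m*(3*H-1)*(6*H-1) - 12*A8 - 9*H*(3*H-1)"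
    and p6: "P6 = 2*m*(H-1)*(2*H-1) - 12*A6 - 3*H*(H-1)"
    and p7: "P7 = 4*m*(H-1)*(2*H-1) - 12*A7 - 3*H*(H-1)"
    and a5: "A5 + A8 = m*((1) + (6)*a) + ((1) + (3)*a) + 2*w5"
    and a6: "A6 + A7 = m*((2)*a) + (a) + 2*w6"
  shows "3*H*(D4 + 2*D2 + D3 - 6*D1 - 24*m + 4*(H*(3+6*m) + g*(1-4*m^2))) = 16*m*((-9) + (6)*A8 + (-27)*a + (-8)*m^2*t + (2)*t + (-9)*w5 + (9)*w6)"
proof -
  have e1: "3*H*D1 = 9*H^2+m^2+1-9*H*m - m*P5" using r1 by linarith
  have e2: "H*D2 = H^2+m^2+1-3*H*m - m*P6" using r2 by linarith
  have e3: "H*D3 = H^2+4*m^2+1-6*H*m - 2*m*P7" using r3 by linarith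
  have e4: "3*H*D4 = 9*H^2+4*m^2+1-18*H*m - 2*m*P8" using r4 by linarith
  have f5: "A5 = m*((1) + (6)*a) + ((1) + (3)*a) + 2*w5 - A8" using a5 by linarith
  have f6: "A6 = m*((2)*a) + (a) + 2*w6 - A7" using a6 by linarith
  have "3*H*(D4 + 2*D2 + D3 - 6*D1 - 24*m + 4*(H*(3+6*m) + g*(1-4*m^2)))
      = (3*H*D4) + 6*(H*D2) + 3*(H*D3) - 6*(3*H*D1) - 72*H*m + 12*H*H*(3+6*m) + 4*(3*H*g)*(1-4*m^2)"
    by (simp add: algebra_simps)
  also have "\<dots> = (9*H^2+4*m^2+1-18*H*m - 2*m*P8) + 6*(H^2+m^2+1-3*H*m - m*P6) + 3*(H^2+4*m^2+1-6*H*m - 2*m*P7) - 6*(9*H^2+m^2+1-9*H*m - m*P5) - 72*H*m + 12*H*H*(3+6*m) + 4*(8*m*t - 1)*(1-4*m^2)"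
    by (simp only: e1 e2 e3 e4 ht)
  also have "\<dots> = 16*m*((-9) + (6)*A8 + (-27)*a + (-8)*m^2*t + (2)*t + (-9)*w5 + (9)*w6)"
    unfolding p5 p6 p7 p8 f5 f6 hH by algebra
  finally show ?thesis .
qed

lemma alg1_b1:
  fixes H m g t A5 A6 A7 A8 D1 D2 D3 D4 P5 P6 P7 P8 w5 w6 a :: int
  assumes hH: "H = 4*a+3" and ht: "3*H*g = 8*m*t - 1"
    and r1: "3*H*D1 + m*P5 = 9*H^2+m^2+1-9*H*m"
    and r2: "H*D2 + m*P6 = H^2+m^2+1-3*H*m"
    and r3: "H*D3 + 2*m*P7 = H^2+4*m^2+1-6*H*m"
    and r4: "3*H*D4 + 2*m*P8 = 9*H^2+4*m^2+1-18*H*m"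
    and p5: "P5 = 2*m*(3*H-1)*(6*H-1) - 12*A5 - 9*H*(3*H-1)"
    and p8: "P8 = 4*m*(3*H-1)*(6*H-1) - 12*A8 - 9*H*(3*H-1)"
    and p6: "P6 = 2*m*(H-1)*(2*H-1) - 12*A6 - 3*H*(H-1)"
    and p7: "P7 = 4*m*(H-1)*(2*H-1) - 12*A7 - 3*H*(H-1)"
    and a5: "A5 + A8 = m*((4) + (6)*a) + ((2) + (3)*a) + 2*w5"
    and a6: "A6 + A7 = m*((1) + (2)*a) + ((1) + a) + 2*w6"
  shows "3*H*(2*D1 + 2*D2 + D3 - D4 - 2*(H*(3+6*m) + g*(8*m^2-5))) = 16*m*((-6) + (-3)*A8 + (-9)*a + (36)*a*m + (24)*m + (-8)*m^2*t + (5)*t + (3)*w5 + (9)*w6)"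
proof -
  have e1: "3*H*D1 = 9*H^2+m^2+1-9*H*m - m*P5" using r1 by linarith
  have e2: "H*D2 = H^2+m^2+1-3*H*m - m*P6" using r2 by linarith
  have e3: "H*D3 = H^2+4*m^2+1-6*H*m - 2*m*P7" using r3 by linarith
  have e4: "3*H*D4 = 9*H^2+4*m^2+1-18*H*m - 2*m*P8" using r4 by linarith
  have f5: "A5 = m*((4) + (6)*a) + ((2) + (3)*a) + 2*w5 - A8" using a5 by linarith
  have f6: "A6 = m*((1) + (2)*a) + ((1) + a) + 2*w6 - A7" using a6 by linarith
  have "3*H*(2*D1 + 2*D2 + D3 - D4 - 2*(H*(3+6*m) + g*(8*m^2-5)))
      = 2*(3*H*D1) + 6*(H*D2) + 3*(H*D3) - (3*H*D4) - 6*H*H*(3+6*m) - 2*(3*H*g)*(8*m^2-5)"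
    by (simp add: algebra_simps)
  also have "\<dots> = 2*(9*H^2+m^2+1-9*H*m - m*P5) + 6*(H^2+m^2+1-3*H*m - m*P6) + 3*(H^2+4*m^2+1-6*H*m - 2*m*P7) - (9*H^2+4*m^2+1-18*H*m - 2*m*P8) - 6*H*H*(3+6*m) - 2*(8*m*t - 1)*(8*m^2-5)"
    by (simp only: e1 e2 e3 e4 ht)
  also have "\<dots> = 16*m*((-6) + (-3)*A8 + (-9)*a + (36)*a*m + (24)*m + (-8)*m^2*t + (5)*t + (3)*w5 + (9)*w6)"
    unfolding p5 p6 p7 p8 f5 f6 hH by algebra
  finally show ?thesis .
qed

lemma alg2_b1:
  fixes H m g t A5 A6 A7 A8 D1 D2 D3 D4 P5 P6 P7 P8 w5 w6 a :: int
  assumes hH: "H = 4*a+3" and ht: "3*H*g = 8*m*t - 1"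
    and r1: "3*H*D1 + m*P5 = 9*H^2+m^2+1-9*H*m"
    and r2: "H*D2 + m*P6 = H^2+m^2+1-3*H*m"
    and r3: "H*D3 + 2*m*P7 = H^2+4*m^2+1-6*H*m"
    and r4: "3*H*D4 + 2*m*P8 = 9*H^2+4*m^2+1-18*H*m"
    and p5: "P5 = 2*m*(3*H-1)*(6*H-1) - 12*A5 - 9*H*(3*H-1)"
    and p8: "P8 = 4*m*(3*H-1)*(6*H-1) - 12*A8 - 9*H*(3*H-1)"
    and p6: "P6 = 2*m*(H-1)*(2*H-1) - 12*A6 - 3*H*(H-1)"
    and p7: "P7 = 4*m*(H-1)*(2*H-1) - 12*A7 - 3*H*(H-1)"
    and a5: "A5 + A8 = m*((4) + (6)*a) + ((2) + (3)*a) + 2*w5"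
    and a6: "A6 + A7 = m*((1) + (2)*a) + ((1) + a) + 2*w6"
  shows "3*H*(D4 + 2*D2 + D3 - 6*D1 - 24*m + 4*(H*(3+6*m) + g*(1-4*m^2))) = 16*m*((-18) + (6)*A8 + (-27)*a + (-8)*m^2*t + (2)*t + (-9)*w5 + (9)*w6)"
proof -
  have e1: "3*H*D1 = 9*H^2+m^2+1-9*H*m - m*P5" using r1 by linarith
  have e2: "H*D2 = H^2+m^2+1-3*H*m - m*P6" using r2 by linarith
  have e3: "H*D3 = H^2+4*m^2+1-6*H*m - 2*m*P7" using r3 by linarith
  have e4: "3*H*D4 = 9*H^2+4*m^2+1-18*H*m - 2*m*P8" using r4 by linarith
  have f5: "A5 = m*((4) + (6)*a) + ((2) + (3)*a) + 2*w5 - A8" using a5 by linarith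
  have f6: "A6 = m*((1) + (2)*a) + ((1) + a) + 2*w6 - A7" using a6 by linarith
  have "3*H*(D4 + 2*D2 + D3 - 6*D1 - 24*m + 4*(H*(3+6*m) + g*(1-4*m^2)))
      = (3*H*D4) + 6*(H*D2) + 3*(H*D3) - 6*(3*H*D1) - 72*H*m + 12*H*H*(3+6*m) + 4*(3*H*g)*(1-4*m^2)"
    by (simp add: algebra_simps)
  also have "\<dots> = (9*H^2+4*m^2+1-18*H*m - 2*m*P8) + 6*(H^2+m^2+1-3*H*m - m*P6) + 3*(H^2+4*m^2+1-6*H*m - 2*m*P7) - 6*(9*H^2+m^2+1-9*H*m - m*P5) - 72*H*m + 12*H*H*(3+6*m) + 4*(8*m*t - 1)*(1-4*m^2)"
    by (simp only: e1 e2 e3 e4 ht)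
  also have "\<dots> = 16*m*((-18) + (6)*A8 + (-27)*a + (-8)*m^2*t + (2)*t + (-9)*w5 + (9)*w6)"
    unfolding p5 p6 p7 p8 f5 f6 hH by algebra
  finally show ?thesis .
qed



lemma three_dvd_sq_minus1: "\<not> 3 dvd (m::int) \<Longrightarrow> 3 dvd (m^2 - 1)"
proof -
  assume "\<not> 3 dvd m"
  then have "3 dvd (m - 1) \<or> 3 dvd (m + 1)" by presburger
  moreover have "m^2 - 1 = (m - 1) * (m + 1)" by (simp add: algebra_simps power2_eq_square)
  ultimately show ?thesis by auto
qed

lemma DD_3dvd:
  assumes "\<not> 3 dvd c"
  shows "3 dvd DD d c"
proof -
  have "\<not> 3 dvd int c" using assms by (metis int_dvd_int_iff of_nat_numeral)
  then have "3 dvd (int c - 1) \<or> 3 dvd (2 * int c - 1)" by presburger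
  then have "3 dvd (int c - 1) * (2 * int c - 1)" by auto
  then have "3 dvd 2 * d * ((int c - 1) * (2 * int c - 1))" by simp
  then have "3 dvd 2 * d * (int c - 1) * (2 * int c - 1)" by (simp add: mult.assoc)
  moreover have "3 dvd 12 * AA d c" by simp
  moreover have "3 dvd 3 * int c * (int c - 1)" by simp
  ultimately show ?thesis unfolding DD_def by (intro dvd_diff) auto
qed

lemma core_eqs:
  fixes m hn :: nat and g t :: int
  assumes m1: "m \<ge> 1" and m3: "\<not> 3 dvd m" and cop: "coprime hn (2*m)"
    and ht: "3 * int hn * g = 8 * int m * t - 1"
  shows "\<exists>R1 R2. 3 * int hn * (2*DD (3*int hn) m + 2*DD (int hn) m + DD (int hn) (2*m) - DD (3*int hn) (2*m)
                    - 2*(int hn*(3+6*int m) + g*(8*int m^2 - 5))) = 16 * int m * R1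
            \<and> 3 * int hn * (DD (3*int hn) (2*m) + 2*DD (int hn) m + DD (int hn) (2*m) - 6*DD (3*int hn) m - 24*int m
                    + 4*(int hn*(3+6*int m) + g*(1 - 4*int m^2))) = 16 * int m * R2"
proof -
  have hodd: "odd hn" using cop by (metis coprime_common_divisor_nat dvd_mult2 dvd_refl even_iff_mod_2_eq_zero odd_one dvd_triv_left)
  have hpos: "hn > 0" using hodd by (cases hn) auto
  have mpos: "m > 0" using m1 by simp
  have c3m: "coprime 3 m" using m3 by (simp add: prime_imp_coprime_nat)
  have c32: "coprime 3 (2*m)" using c3m by simp
  have chm: "coprime hn m" using cop by simp
  have ch2m: "coprime hn (2*m)" using cop .
  have c3hm: "coprime (3*hn) m" using chm c3m by simp
  have c3h2m: "coprime (3*hn) (2*m)" using ch2m c32 by simp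
  have cmh: "coprime m hn" using chm by (simp add: coprime_commute)
  have cm3h: "coprime m (3*hn)" using c3hm by (simp add: coprime_commute)
  note rec1 = reciprocity[OF c3hm _ mpos] and rec2 = reciprocity[OF chm hpos mpos]
    and rec3 = reciprocity[OF ch2m hpos] and rec4 = reciprocity[OF c3h2m]
  define H where "H = int hn"
  define M where "M = int m"
  have r1: "3*H*DD (3*int hn) m + M*DD (int m) (3*hn) = 9*H^2+M^2+1-9*H*M"
    using rec1 hpos unfolding H_def M_def by (simp add: algebra_simps power2_eq_square)
  have r2: "H*DD (int hn) m + M*DD (int m) hn = H^2+M^2+1-3*H*M"
    using rec2 unfolding H_def M_def by (simp add: algebra_simps power2_eq_square)
  have r3: "H*DD (int hn) (2*m) + 2*M*DD (int (2*m)) hn = H^2+4*M^2+1-6*H*M"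
    using rec3 mpos unfolding H_def M_def by (simp add: algebra_simps power2_eq_square)
  have r4: "3*H*DD (3*int hn) (2*m) + 2*M*DD (int (2*m)) (3*hn) = 9*H^2+4*M^2+1-18*H*M"
    using rec4 hpos mpos unfolding H_def M_def by (simp add: algebra_simps power2_eq_square)
  have p5: "DD (int m) (3*hn) = 2*M*(3*H-1)*(6*H-1) - 12*AA (int m) (3*hn) - 9*H*(3*H-1)"
    unfolding DD_def H_def M_def by (simp add: algebra_simps)
  have p8: "DD (int (2*m)) (3*hn) = 4*M*(3*H-1)*(6*H-1) - 12*AA (int (2*m)) (3*hn) - 9*H*(3*H-1)"
    unfolding DD_def H_def M_def by (simp add: algebra_simps)
  have p6: "DD (int m) hn = 2*M*(H-1)*(2*H-1) - 12*AA (int m) hn - 3*H*(H-1)"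
    unfolding DD_def H_def M_def by (simp add: algebra_simps)
  have p7: "DD (int (2*m)) hn = 4*M*(H-1)*(2*H-1) - 12*AA (int (2*m)) hn - 3*H*(H-1)"
    unfolding DD_def H_def M_def by (simp add: algebra_simps)
  have ht': "3*H*g = 8*M*t - 1" using ht unfolding H_def M_def .
  have "hn mod 4 = 1 \<or> hn mod 4 = 3" using hodd by presburger
  moreover have "hn = 4 * (hn div 4) + hn mod 4" by simp
  ultimately obtain a where "hn = 4*a+1 \<or> hn = 4*a+3" by metis
  then show ?thesis
  proof
    assume ha: "hn = 4*a+1"
    have hH: "H = 4*int a + 1" unfolding H_def ha by simp
    have e6: "even (AA (int m) (Suc (2*(2*a))) + AA (int (2*m)) (Suc (2*(2*a))) - int m * int (2*a) - int ((2*a+1) div 2))"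
      using pair_parity[of m "2*a"] cmh ha by simp
    have "Suc (2*(2*a)) = hn" using ha by simp
    then have "even (AA (int m) hn + AA (int (2*m)) hn - M * (2*int a) - int a)" using e6 unfolding M_def by simp
    then obtain w6 where "AA (int m) hn + AA (int (2*m)) hn - M * (2*int a) - int a = 2*w6" by (elim evenE)
    then have a6: "AA (int m) hn + AA (int (2*m)) hn = M*(2*int a) + int a + 2*w6" by linarith
    have eq5: "Suc (2*(6*a+1)) = 3*hn" using ha by simp
    have c5: "coprime m (Suc (2*(6*a+1)))" unfolding eq5 by (rule cm3h)
    note e5 = pair_parity[OF c5, unfolded eq5]
    have d5: "int ((6*a+1+1) div 2) = 1 + 3*int a" by simp
    have i5: "int m * int (6*a+1) = M * (1 + 6*int a)" unfolding M_def by simp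
    have "even (AA (int m) (3*hn) + AA (int (2*m)) (3*hn) - M * (1 + 6*int a) - (1 + 3*int a))"
      using e5 unfolding d5 i5 .
    then obtain w5 where "AA (int m) (3*hn) + AA (int (2*m)) (3*hn) - M * (1 + 6*int a) - (1 + 3*int a) = 2*w5" by (elim evenE)
    then have a5: "AA (int m) (3*hn) + AA (int (2*m)) (3*hn) = M*(1 + 6*int a) + (1 + 3*int a) + 2*w5" by linarith
    show ?thesis
      using alg1_b0[OF hH ht' r1 r2 r3 r4 p5 p8 p6 p7 a5 a6] alg2_b0[OF hH ht' r1 r2 r3 r4 p5 p8 p6 p7 a5 a6]
      unfolding H_def M_def by blast
  next
    assume ha: "hn = 4*a+3"
    have hH: "H = 4*int a + 3" unfolding H_def ha by simp
    have eq6: "Suc (2*(2*a+1)) = hn" using ha by simp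
    have c6: "coprime m (Suc (2*(2*a+1)))" unfolding eq6 by (rule cmh)
    note e6 = pair_parity[OF c6, unfolded eq6]
    have d6: "int ((2*a+1+1) div 2) = 1 + int a" by simp
    have i6: "int m * int (2*a+1) = M * (1 + 2*int a)" unfolding M_def by simp
    have "even (AA (int m) hn + AA (int (2*m)) hn - M * (1 + 2*int a) - (1 + int a))"
      using e6 unfolding d6 i6 .
    then obtain w6 where "AA (int m) hn + AA (int (2*m)) hn - M * (1 + 2*int a) - (1 + int a) = 2*w6" by (elim evenE)
    then have a6: "AA (int m) hn + AA (int (2*m)) hn = M*(1 + 2*int a) + (1 + int a) + 2*w6" by linarith
    have eq5: "Suc (2*(6*a+4)) = 3*hn" using ha by simp
    have c5: "coprime m (Suc (2*(6*a+4)))" unfolding eq5 by (rule cm3h)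
    note e5 = pair_parity[OF c5, unfolded eq5]
    have d5: "int ((6*a+4+1) div 2) = 2 + 3*int a" by simp
    have i5: "int m * int (6*a+4) = M * (4 + 6*int a)" unfolding M_def by simp
    have "even (AA (int m) (3*hn) + AA (int (2*m)) (3*hn) - M * (4 + 6*int a) - (2 + 3*int a))"
      using e5 unfolding d5 i5 .
    then obtain w5 where "AA (int m) (3*hn) + AA (int (2*m)) (3*hn) - M * (4 + 6*int a) - (2 + 3*int a) = 2*w5" by (elim evenE)
    then have a5: "AA (int m) (3*hn) + AA (int (2*m)) (3*hn) = M*(4 + 6*int a) + (2 + 3*int a) + 2*w5" by linarith
    show ?thesis
      using alg1_b1[OF hH ht' r1 r2 r3 r4 p5 p8 p6 p7 a5 a6] alg2_b1[OF hH ht' r1 r2 r3 r4 p5 p8 p6 p7 a5 a6]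
      unfolding H_def M_def by blast
  qed
qed



lemma core_dvd:
  fixes m hn :: nat and g t :: int
  assumes m1: "m \<ge> 1" and m3: "\<not> 3 dvd m" and cop: "coprime hn (2*m)"
    and ht: "3 * int hn * g = 8 * int m * t - 1"
  shows "48 * int m dvd (2*DD (3*int hn) m + 2*DD (int hn) m + DD (int hn) (2*m) - DD (3*int hn) (2*m)
                    - 2*(int hn*(3+6*int m) + g*(8*int m^2 - 5)))" (is "_ dvd ?Q1")
    and "48 * int m dvd (DD (3*int hn) (2*m) + 2*DD (int hn) m + DD (int hn) (2*m) - 6*DD (3*int hn) m - 24*int m
                    + 4*(int hn*(3+6*int m) + g*(1 - 4*int m^2)))" (is "_ dvd ?Q2")
proof -
  obtain R1 R2 where e1: "3 * int hn * ?Q1 = 16 * int m * R1" and e2: "3 * int hn * ?Q2 = 16 * int m * R2"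
    using core_eqs[OF assms] by blast
  have hodd: "odd hn" using cop by (metis coprime_common_divisor_nat dvd_mult2 dvd_refl even_iff_mod_2_eq_zero odd_one dvd_triv_left)
  have c3m: "coprime 3 m" using m3 by (simp add: prime_imp_coprime_nat)
  have chm: "coprime hn m" using cop by simp
  have c2: "coprime 2 (3*hn)" using hodd by simp
  have c16: "coprime 16 (3*hn)" using coprime_power_left_iff[of 2 4 "3*hn"] c2 by simp
  have "coprime m (3*hn)" using chm c3m by (simp add: coprime_commute)
  then have "coprime (16*m) (3*hn)" using c16 by simp
  then have cop16: "coprime (16 * int m) (3 * int hn)" by (metis coprime_int_iff of_nat_mult of_nat_numeral)
  have c3_16: "coprime (3::int) (16 * int m)"
  proof -
    have "coprime (3::nat) 16" by (simp add: prime_imp_coprime_nat)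
    then have "coprime (3::nat) (16 * m)" using c3m by simp
    then show ?thesis by (metis coprime_int_iff of_nat_mult of_nat_numeral)
  qed
  have m3i: "\<not> 3 dvd int m" using m3 by (metis int_dvd_int_iff of_nat_numeral)
  have m3b: "\<not> 3 dvd (2*m)" using m3 by presburger
  have dm: "3 dvd DD d m" for d using DD_3dvd[OF m3] .
  have d2m: "3 dvd DD d (2*m)" for d using DD_3dvd[OF m3b] .
  have sq: "3 dvd (int m^2 - 1)" using three_dvd_sq_minus1[OF m3i] .
  have q1_3: "3 dvd ?Q1"
  proof -
    have "3 dvd (8*int m^2 - 5)"
    proof -
      have eq: "8*int m^2 - 5 = 8*(int m^2 - 1) + 3" by simp
      have "3 dvd 8*(int m^2 - 1) + 3" using sq by (intro dvd_add dvd_mult) auto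
      then show ?thesis unfolding eq .
    qed
    then obtain y where y: "8*int m^2 - 5 = 3*y" by (elim dvdE)
    obtain x1 where x1: "DD (3*int hn) m = 3*x1" using dm[of "3*int hn"] by (elim dvdE)
    obtain x2 where x2: "DD (int hn) m = 3*x2" using dm[of "int hn"] by (elim dvdE)
    obtain x3 where x3: "DD (int hn) (2*m) = 3*x3" using d2m[of "int hn"] by (elim dvdE)
    obtain x4 where x4: "DD (3*int hn) (2*m) = 3*x4" using d2m[of "3*int hn"] by (elim dvdE)
    have "?Q1 = 3*(2*x1 + 2*x2 + x3 - x4 - 2*(int hn*(1+2*int m) + g*y))"
      unfolding x1 x2 x3 x4 y by (simp add: algebra_simps)
    then show ?thesis by (simp only: dvd_triv_left)
  qed
  have q2_3: "3 dvd ?Q2"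
  proof -
    have "3 dvd (1 - 4*int m^2)"
    proof -
      have eq: "1 - 4*int m^2 = -4*(int m^2 - 1) - 3" by simp
      have "3 dvd -4*(int m^2 - 1)" using sq by (rule dvd_mult)
      then have "3 dvd -4*(int m^2 - 1) - 3" by (rule dvd_diff) simp
      then show ?thesis unfolding eq .
    qed
    then obtain y where y: "1 - 4*int m^2 = 3*y" by (elim dvdE)
    obtain x1 where x1: "DD (3*int hn) m = 3*x1" using dm[of "3*int hn"] by (elim dvdE)
    obtain x2 where x2: "DD (int hn) m = 3*x2" using dm[of "int hn"] by (elim dvdE)
    obtain x3 where x3: "DD (int hn) (2*m) = 3*x3" using d2m[of "int hn"] by (elim dvdE)
    obtain x4 where x4: "DD (3*int hn) (2*m) = 3*x4" using d2m[of "3*int hn"] by (elim dvdE)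
    have "?Q2 = 3*(x4 + 2*x2 + x3 - 6*x1 - 8*int m + 4*(int hn*(1+2*int m)) + 4*g*y)"
      unfolding x1 x2 x3 x4 y by (simp add: algebra_simps)
    then show ?thesis by (simp only: dvd_triv_left)
  qed
  have "16 * int m dvd 3 * int hn * ?Q1" using e1 by simp
  then have q1_16: "16 * int m dvd ?Q1" using cop16 by (simp add: coprime_dvd_mult_right_iff)
  have "16 * int m dvd 3 * int hn * ?Q2" using e2 by simp
  then have q2_16: "16 * int m dvd ?Q2" using cop16 by (simp add: coprime_dvd_mult_right_iff)
  have "3 * (16 * int m) dvd ?Q1" using q1_3 q1_16 c3_16 by (rule divides_mult)
  then show "48 * int m dvd ?Q1" by simp
  have "3 * (16 * int m) dvd ?Q2" using q2_3 q2_16 c3_16 by (rule divides_mult)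
  then show "48 * int m dvd ?Q2" by simp
qed



lemma exp_pi_shift:
  fixes x y :: real and n :: int
  assumes "x = y + 2 * of_int n"
  shows "exp (complex_of_real pi * \<i> * complex_of_real x) = exp (complex_of_real pi * \<i> * complex_of_real y)"
proof -
  have e: "complex_of_real pi * \<i> * complex_of_real x = complex_of_real pi * \<i> * complex_of_real y + \<i> * (of_int n * (of_real pi * 2))"
    unfolding assms by (simp add: algebra_simps)
  show ?thesis unfolding e by (rule exp_plus_2pin)
qed

lemma omega_DD: "c \<ge> 1 \<Longrightarrow> omega d c = exp (complex_of_real pi * \<i> * complex_of_real (real_of_int (DD d c) / (12 * real c)))"
  unfolding omega_def by (simp add: dedekind_DD)

lemma zmul: "exp (c * complex_of_real a) * exp (c * complex_of_real b) = exp (c * complex_of_real (a + b))"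
  by (simp add: exp_add[symmetric] distrib_left)

lemma zdiv: "exp (c * complex_of_real a) / exp (c * complex_of_real b) = exp (c * complex_of_real (a - b))"
  by (simp add: exp_diff[symmetric] right_diff_distrib)

lemma zneg: "- exp (complex_of_real pi * \<i> * complex_of_real a) = exp (complex_of_real pi * \<i> * complex_of_real (a + 1))"
proof -
  have e: "complex_of_real pi * \<i> * complex_of_real (a + 1) = complex_of_real pi * \<i> * complex_of_real a + complex_of_real pi * \<i>"
    by (simp add: distrib_left)
  have "exp (complex_of_real pi * \<i> * complex_of_real (a + 1)) = exp (complex_of_real pi * \<i> * complex_of_real a) * exp (complex_of_real pi * \<i>)"
    unfolding e by (rule exp_add)
  also have "exp (complex_of_real pi * \<i>) = -1" by simp
  finally show ?thesis by simp
qed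

theorem lemma3p3:
  fixes k :: nat and h h' :: int
  assumes "gcd k 6 = 2"
    and "coprime h (int k)"
    and "[h * h' = -1] (mod (4 * int k))"
    and "3 dvd h'"
  shows "(omega (3*h) (k div 2) * omega h (k div 2) * omega h k / omega (3*h) k
           = exp (2 * complex_of_real pi * \<i> / (36 * of_nat k)
                  * (of_int h * (9 + 9 * of_nat k) + of_int h' * (-5 + 2 * (of_nat k)^2))))
       \<and> (omega (3*h) k * omega h (k div 2) * omega h k / (omega (3*h) (k div 2))^3
           = - exp (- (2 * complex_of_real pi * \<i> / (18 * of_nat k))
                  * (of_int h * (9 + 9 * of_nat k) + of_int h' * (1 - (of_nat k)^2))))"
proof -
  have "2 dvd gcd k 6" using assms(1) by simp
  then have kev: "even k" by (metis dvd_trans gcd_dvd1)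
  have k3: "\<not> 3 dvd k"
  proof
    assume "3 dvd k"
    then have "3 dvd gcd k 6" by simp
    then show False using assms(1) by simp
  qed
  have k0: "k \<noteq> 0" using assms(1) by (cases "k = 0") simp_all
  define m where "m = k div 2"
  have km: "k = 2 * m" unfolding m_def using kev by simp
  have m1: "m \<ge> 1" using k0 km by simp
  have m3: "\<not> 3 dvd m" using k3 km by presburger
  define s where "s = h div (12 * int k)"
  define h0 where "h0 = h mod (12 * int k)"
  have hs: "h = h0 + 12 * int k * s" unfolding h0_def s_def by simp
  have h0nn: "h0 \<ge> 0" unfolding h0_def using k0 by simp
  define hn where "hn = nat h0"
  have hn: "int hn = h0" unfolding hn_def using h0nn by simp
  have "h = h0 + (12 * s) * int k" using hs by simp
  then have "[h = h0] (mod int k)" by (simp add: cong_def)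
  then have "coprime h0 (int k)" using assms(2) cong_imp_coprime by blast
  then have "coprime (int hn) (int (2*m))" unfolding hn km by simp
  then have cop: "coprime hn (2*m)" by (simp only: coprime_int_iff)
  obtain g where g: "h' = 3 * g" using assms(4) by (elim dvdE)
  have "4 * int k dvd h * h' - (-1)" using assms(3) by (simp add: cong_iff_dvd_diff)
  then have d1: "4 * int k dvd h * h' + 1" by simp
  have "h0 * h' + 1 = (h * h' + 1) - 4 * int k * (3 * s * h')" unfolding hs by (simp add: algebra_simps)
  then have "4 * int k dvd h0 * h' + 1" by (simp only:) (rule dvd_diff[OF d1], simp)
  then obtain t where "h0 * h' + 1 = 4 * int k * t" by (elim dvdE)
  then have ht: "3 * int hn * g = 8 * int m * t - 1" unfolding hn g km by (simp add: algebra_simps)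
  note cd = core_dvd[OF m1 m3 cop ht]
  have P1: "DD (3*h) m = DD (3*int hn) m"
  proof -
    have e: "3*h = 3*int hn + int m * (72 * s)" unfolding hs hn km by (simp add: algebra_simps)
    show ?thesis unfolding e by (rule DD_periodic[OF m1])
  qed
  have P2: "DD h m = DD (int hn) m"
  proof -
    have e: "h = int hn + int m * (24 * s)" unfolding hs hn km by (simp add: algebra_simps)
    show ?thesis unfolding e by (rule DD_periodic[OF m1])
  qed
  have m2: "2*m \<ge> 1" using m1 by simp
  have P3: "DD h (2*m) = DD (int hn) (2*m)"
  proof -
    have e: "h = int hn + int (2*m) * (12 * s)" unfolding hs hn km by (simp add: algebra_simps)
    show ?thesis unfolding e by (rule DD_periodic[OF m2])
  qed
  have P4: "DD (3*h) (2*m) = DD (3*int hn) (2*m)"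
  proof -
    have e: "3*h = 3*int hn + int (2*m) * (36 * s)" unfolding hs hn km by (simp add: algebra_simps)
    show ?thesis unfolding e by (rule DD_periodic[OF m2])
  qed
  have hsm: "h = int hn + 24 * int m * s" using hs hn km by simp
  define D1 where "D1 = DD (3*h) m"
  define D2 where "D2 = DD h m"
  define D3 where "D3 = DD h (2*m)"
  define D4 where "D4 = DD (3*h) (2*m)"
  have q1: "48 * int m dvd (2*D1 + 2*D2 + D3 - D4 - 2*(h*(3+6*int m) + g*(8*int m^2 - 5)))"
  proof -
    have eq: "2*D1 + 2*D2 + D3 - D4 - 2*(h*(3+6*int m) + g*(8*int m^2 - 5))
        = (2*DD (3*int hn) m + 2*DD (int hn) m + DD (int hn) (2*m) - DD (3*int hn) (2*m)
                    - 2*(int hn*(3+6*int m) + g*(8*int m^2 - 5))) - 48 * int m * (s * (3 + 6 * int m))"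
      unfolding D1_def D2_def D3_def D4_def P1 P2 P3 P4 by (simp add: hsm algebra_simps)
    show ?thesis unfolding eq by (rule dvd_diff[OF cd(1)]) simp
  qed
  have q2: "48 * int m dvd (D4 + 2*D2 + D3 - 6*D1 - 24*int m + 4*(h*(3+6*int m) + g*(1 - 4*int m^2)))"
  proof -
    have eq: "D4 + 2*D2 + D3 - 6*D1 - 24*int m + 4*(h*(3+6*int m) + g*(1 - 4*int m^2))
        = (DD (3*int hn) (2*m) + 2*DD (int hn) m + DD (int hn) (2*m) - 6*DD (3*int hn) m - 24*int m
                    + 4*(int hn*(3+6*int m) + g*(1 - 4*int m^2))) + 48 * int m * (2 * s * (3 + 6 * int m))"
      unfolding D1_def D2_def D3_def D4_def P1 P2 P3 P4 by (simp add: hsm algebra_simps)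
    show ?thesis unfolding eq by (rule dvd_add[OF cd(2)]) simp
  qed
  obtain n1 where n1: "2*D1 + 2*D2 + D3 - D4 - 2*(h*(3+6*int m) + g*(8*int m^2 - 5)) = 48 * int m * n1"
    using q1 by (elim dvdE)
  obtain n2 where n2: "D4 + 2*D2 + D3 - 6*D1 - 24*int m + 4*(h*(3+6*int m) + g*(1 - 4*int m^2)) = 48 * int m * n2"
    using q2 by (elim dvdE)
  define c where "c = complex_of_real pi * \<i>"
  have mpos: "real m > 0" using m1 by simp
  have o1: "omega (3*h) m = exp (c * complex_of_real (real_of_int D1 / (12 * real m)))"
    unfolding c_def D1_def using omega_DD[OF m1] by simp
  have o2: "omega h m = exp (c * complex_of_real (real_of_int D2 / (12 * real m)))"
    unfolding c_def D2_def using omega_DD[OF m1] by simp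
  have o3: "omega h (2*m) = exp (c * complex_of_real (real_of_int D3 / (24 * real m)))"
    unfolding c_def D3_def using omega_DD[OF m2] by simp
  have o4: "omega (3*h) (2*m) = exp (c * complex_of_real (real_of_int D4 / (24 * real m)))"
    unfolding c_def D4_def using omega_DD[OF m2] by simp
  have kc: "(of_nat k :: complex) \<noteq> 0" using k0 by simp
  have krr: "real k \<noteq> 0" using k0 by simp
  define r1 where "r1 = 2 * (real_of_int h * (9 + 9 * real k) + real_of_int h' * (-5 + 2 * (real k)^2)) / (36 * real k)"
  define r2 where "r2 = - (2 * (real_of_int h * (9 + 9 * real k) + real_of_int h' * (1 - (real k)^2)) / (18 * real k))"
  have R1: "2 * complex_of_real pi * \<i> / (36 * of_nat k) * (of_int h * (9 + 9 * of_nat k) + of_int h' * (-5 + 2 * (of_nat k)^2))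
      = c * complex_of_real r1"
    unfolding c_def r1_def using kc krr by (simp add: field_simps)
  have R2: "- (2 * complex_of_real pi * \<i> / (18 * of_nat k)) * (of_int h * (9 + 9 * of_nat k) + of_int h' * (1 - (of_nat k)^2))
      = c * complex_of_real r2"
    unfolding c_def r2_def using kc krr by (simp add: field_simps)
  have n1r: "2 * real_of_int D1 + 2 * real_of_int D2 + real_of_int D3 - real_of_int D4
      - 2 * (real_of_int h * (3 + 6 * real m) + real_of_int g * (8 * (real m)^2 - 5)) = 48 * real m * real_of_int n1"
  proof -
    have "real_of_int (2*D1 + 2*D2 + D3 - D4 - 2*(h*(3+6*int m) + g*(8*int m^2 - 5))) = real_of_int (48 * int m * n1)"
      using n1 by simp
    then show ?thesis by simp
  qed
  have n2r: "real_of_int D4 + 2 * real_of_int D2 + real_of_int D3 - 6 * real_of_int D1 - 24 * real m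
      + 4 * (real_of_int h * (3 + 6 * real m) + real_of_int g * (1 - 4 * (real m)^2)) = 48 * real m * real_of_int n2"
  proof -
    have "real_of_int (D4 + 2*D2 + D3 - 6*D1 - 24*int m + 4*(h*(3+6*int m) + g*(1 - 4*int m^2))) = real_of_int (48 * int m * n2)"
      using n2 by simp
    then show ?thesis by simp
  qed
  have kr: "real k = 2 * real m" using km by simp
  have gr: "real_of_int h' = 3 * real_of_int g" using g by simp
  have E1: "real_of_int D1 / (12 * real m) + real_of_int D2 / (12 * real m) + real_of_int D3 / (24 * real m) - real_of_int D4 / (24 * real m)
      = r1 + 2 * of_int n1"
  proof -
    have "real_of_int D1 / (12 * real m) + real_of_int D2 / (12 * real m) + real_of_int D3 / (24 * real m) - real_of_int D4 / (24 * real m)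
        = (2 * real_of_int D1 + 2 * real_of_int D2 + real_of_int D3 - real_of_int D4) / (24 * real m)"
      using mpos by (simp add: field_simps)
    also have "\<dots> = (48 * real m * real_of_int n1 + 2 * (real_of_int h * (3 + 6 * real m) + real_of_int g * (8 * (real m)^2 - 5))) / (24 * real m)"
      using n1r by (simp add: algebra_simps)
    also have "\<dots> = r1 + 2 * of_int n1"
      unfolding r1_def kr gr using mpos by (simp add: field_simps)
    finally show ?thesis .
  qed
  have E2: "real_of_int D4 / (24 * real m) + real_of_int D2 / (12 * real m) + real_of_int D3 / (24 * real m) - 3 * (real_of_int D1 / (12 * real m))
      = (r2 + 1) + 2 * of_int n2"
  proof -
    have "real_of_int D4 / (24 * real m) + real_of_int D2 / (12 * real m) + real_of_int D3 / (24 * real m) - 3 * (real_of_int D1 / (12 * real m))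
        = (real_of_int D4 + 2 * real_of_int D2 + real_of_int D3 - 6 * real_of_int D1) / (24 * real m)"
      using mpos by (simp add: field_simps)
    also have "\<dots> = (48 * real m * real_of_int n2 + 24 * real m - 4 * (real_of_int h * (3 + 6 * real m) + real_of_int g * (1 - 4 * (real m)^2))) / (24 * real m)"
      using n2r by (simp add: algebra_simps)
    also have "\<dots> = (r2 + 1) + 2 * of_int n2"
      unfolding r2_def kr gr using mpos by (simp add: field_simps)
    finally show ?thesis .
  qed
  have L1: "omega (3*h) (k div 2) * omega h (k div 2) * omega h k / omega (3*h) k
      = exp (c * complex_of_real (real_of_int D1 / (12 * real m) + real_of_int D2 / (12 * real m) + real_of_int D3 / (24 * real m) - real_of_int D4 / (24 * real m)))"
    unfolding m_def[symmetric] unfolding km unfolding o1 o2 o3 o4 zmul zdiv ..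
  have L2: "omega (3*h) k * omega h (k div 2) * omega h k / (omega (3*h) (k div 2))^3
      = exp (c * complex_of_real (real_of_int D4 / (24 * real m) + real_of_int D2 / (12 * real m) + real_of_int D3 / (24 * real m) - 3 * (real_of_int D1 / (12 * real m))))"
  proof -
    have cube: "(omega (3*h) m)^3 = exp (c * complex_of_real (3 * (real_of_int D1 / (12 * real m))))"
      unfolding o1 power3_eq_cube zmul by (simp add: algebra_simps)
    show ?thesis unfolding m_def[symmetric] unfolding km unfolding cube o2 o3 o4 zmul zdiv ..
  qed
  show ?thesis
  proof
    show "omega (3*h) (k div 2) * omega h (k div 2) * omega h k / omega (3*h) k
           = exp (2 * complex_of_real pi * \<i> / (36 * of_nat k)
                  * (of_int h * (9 + 9 * of_nat k) + of_int h' * (-5 + 2 * (of_nat k)^2)))"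
      unfolding L1 R1 unfolding c_def by (rule exp_pi_shift[OF E1])
    show "omega (3*h) k * omega h (k div 2) * omega h k / (omega (3*h) (k div 2))^3
           = - exp (- (2 * complex_of_real pi * \<i> / (18 * of_nat k))
                  * (of_int h * (9 + 9 * of_nat k) + of_int h' * (1 - (of_nat k)^2)))"
      unfolding L2 R2 unfolding c_def zneg by (rule exp_pi_shift[OF E2])
  qed
qed

end
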